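(* Let $(x,y,C)\in Q(r)$ with $r\ge5$, let $d(j_1,j_2):=1-y_{j_1,j_2}$, fix $j^*\in J$ and $0<\beta<1$, and put $U:=\{j\in J: d(j,j^* )\le\beta\}$. Then $|U|\le\frac{c}{1-\beta}$.
   Context: Fix a finite set $J$ of jobs, a partial order $\prec$ on $J$, and $c,S,m\in\mathbb N$. Sherali–Adams lift: for a polytope $K=\{x\in\mathbb R^{V}:Ax\ge b\}$ on a finite index set $V$ and $r\ge0$, $SA_r(K)$ is the set of vectors $y$ indexed by subsets of $V$ of size at most $r+1$ with $y_\emptyset=1$ and, for every row $\ell$ and all $I,J'\subseteq V$ with $|I|+|J'|\le r$, $\sum_{H\subseteq J'}(-1)^{|H|}\big(\sum_{v\in V}A_{\ell,v}y_{I\cup H\cup\{v\}}-b_\ell y_{I\cup H}\big)\ge0$. Scheduling LP: let $V=J\times[m]\times\{0,\dots,S-1\}$ and let $K\subseteq\mathbb R^V$ be the set of $x$ with $\sum_{i\in[m]}\sum_{s}x_{j,i,s}=1$ for all $j\in J$, $\sum_{j\in J}x_{j,i,s}\le c$ for all $i,s$, and $0\le x_{j,i,s}\le1$. For $x\in SA_r(K)$ write $x_{j,i,s}=x_{\{(j,i,s)\}}$ and $x_{(j_1,i_1,s_1),(j_2,i_2,s_2)}=x_{\{(j_1,i_1,s_1),(j_2,i_2,s_2)\}}$. $Q(r)$ is the set of triples $(x,y,C)$ with $x\in SA_r(K)$, $y\in\mathbb R^{J\times J}$, $C\in\mathbb R^J$ satisfying $y_{j_1,j_2}=\sum_{s=0}^{S-1}\sum_{i\in[m]}x_{(j_1,i,s),(j_2,i,s)}$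 for all $j_1,j_2\in J$, $C_{j_2}\ge C_{j_1}+(1-y_{j_1,j_2})$ for all $j_1\prec j_2$, and $C_j\ge0$ for all $j$. *)

theory Defs
  imports Complex_Main
begin

text \<open>A lifted vector is a function on subsets of V; only its
  values on subsets of size at most r+1 are constrained.\<close>
definition sa_lift :: "'v set \<Rightarrow> 'l set \<Rightarrow> ('l \<Rightarrow> 'v \<Rightarrow> real) \<Rightarrow> ('l \<Rightarrow> real)
    \<Rightarrow> nat \<Rightarrow> ('v set \<Rightarrow> real) set" where
  "sa_lift V L A b r = {y. y {} = 1 \<and>
     (\<forall>l\<in>L. \<forall>I J'. I \<subseteq> V \<longrightarrow> J' \<subseteq> V \<longrightarrow> card I + card J' \<le> r \<longrightarrow>
        (\<Sum>H\<in>Pow J'. (-1) ^ card H *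
            ((\<Sum>v\<in>V. A l v * y (I \<union> H \<union> {v})) - b l * y (I \<union> H))) \<ge> 0)}"

text \<open>Index set V = J \<times> [m] \<times> {0..S-1}; machines [m] are rendered as {0..<m}.\<close>
definition sched_vars :: "'j set \<Rightarrow> nat \<Rightarrow> nat \<Rightarrow> ('j \<times> nat \<times> nat) set" where
  "sched_vars J m S = J \<times> {..<m} \<times> {..<S}"

text \<open>Rows of the system A x \<ge> b describing the scheduling LP K
  (each equality is written as two inequalities).\<close>
datatype 'j sched_row =
    AsgLo 'j
  | AsgHi 'j
  | Cap nat nat
  | Lo "'j \<times> nat \<times> nat"
  | Hi "'j \<times> nat \<times> nat"

definition sched_rows :: "'j set \<Rightarrow> nat \<Rightarrow> nat \<Rightarrow> 'j sched_row set" where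
  "sched_rows J m S = AsgLo ` J \<union> AsgHi ` J \<union> {Cap i s |i s. i < m \<and> s < S}
      \<union> Lo ` sched_vars J m S \<union> Hi ` sched_vars J m S"

fun sched_A :: "'j sched_row \<Rightarrow> 'j \<times> nat \<times> nat \<Rightarrow> real" where
  "sched_A (AsgLo j) (j', i, s) = (if j' = j then 1 else 0)"
| "sched_A (AsgHi j) (j', i, s) = (if j' = j then -1 else 0)"
| "sched_A (Cap i s) (j', i', s') = (if i' = i \<and> s' = s then -1 else 0)"
| "sched_A (Lo w) v = (if v = w then 1 else 0)"
| "sched_A (Hi w) v = (if v = w then -1 else 0)"

fun sched_b :: "nat \<Rightarrow> 'j sched_row \<Rightarrow> real" where
  "sched_b c (AsgLo j) = 1"
| "sched_b c (AsgHi j) = -1"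
| "sched_b c (Cap i s) = - real c"
| "sched_b c (Lo w) = 0"
| "sched_b c (Hi w) = -1"

definition SA_sched :: "'j set \<Rightarrow> nat \<Rightarrow> nat \<Rightarrow> nat \<Rightarrow> nat \<Rightarrow> (('j \<times> nat \<times> nat) set \<Rightarrow> real) set" where
  "SA_sched J c S m r = sa_lift (sched_vars J m S) (sched_rows J m S) sched_A (sched_b c) r"

definition Q :: "'j set \<Rightarrow> ('j \<Rightarrow> 'j \<Rightarrow> bool) \<Rightarrow> nat \<Rightarrow> nat \<Rightarrow> nat \<Rightarrow> nat \<Rightarrow>
    ((('j \<times> nat \<times> nat) set \<Rightarrow> real) \<times> ('j \<Rightarrow> 'j \<Rightarrow> real) \<times> ('j \<Rightarrow> real)) set" where
  "Q J prec c S m r = {(x, y, C). x \<in> SA_sched J c S m r \<and>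
     (\<forall>j1\<in>J. \<forall>j2\<in>J. y j1 j2 = (\<Sum>s<S. \<Sum>i<m. x {(j1, i, s), (j2, i, s)})) \<and>
     (\<forall>j1\<in>J. \<forall>j2\<in>J. prec j1 j2 \<longrightarrow> C j2 \<ge> C j1 + (1 - y j1 j2)) \<and>
     (\<forall>j\<in>J. C j \<ge> 0)}"

end

theory Submission
  imports Defs
begin

lemma sa0:
  assumes "y \<in> sa_lift V L A b r" "l \<in> L" "I \<subseteq> V" "card I \<le> r"
  shows "(\<Sum>v\<in>V. A l v * y (I \<union> {v})) \<ge> b l * y I"
proof -
  have "\<forall>l\<in>L. \<forall>I J'. I \<subseteq> V \<longrightarrow> J' \<subseteq> V \<longrightarrow> card I + card J' \<le> r \<longrightarrow>
        (\<Sum>H\<in>Pow J'. (-1) ^ card H *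
            ((\<Sum>v\<in>V. A l v * y (I \<union> H \<union> {v})) - b l * y (I \<union> H))) \<ge> 0"
    using assms(1) unfolding sa_lift_def mem_Collect_eq by (rule conjunct2)
  note H = this[rule_format, OF assms(2) assms(3) empty_subsetI]
  have c0: "card I + card ({}::'a set) \<le> r" using assms(4) by simp
  have "(\<Sum>H\<in>Pow {}. (-1) ^ card H *
            ((\<Sum>v\<in>V. A l v * y (I \<union> H \<union> {v})) - b l * y (I \<union> H))) \<ge> (0::real)"
    by (rule H[OF c0])
  then show ?thesis by simp
qed

lemma sum_if_filter:
  "finite V \<Longrightarrow> (\<Sum>v\<in>V. (if P v then a else 0) * f v) = (a::real) * (\<Sum>v\<in>{v\<in>V. P v}. f v)"
proof -
  assume f: "finite V"
  have "(\<Sum>v\<in>V. (if P v then a else 0) * f v) = (\<Sum>v\<in>V. if P v then a * f v else 0)"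
    by (rule sum.cong) auto
  also have "\<dots> = (\<Sum>v\<in>{v\<in>V. P v}. a * f v)" using f by (rule sum.inter_filter[symmetric])
  finally show ?thesis by (simp add: sum_distrib_left)
qed

theorem mainTheorem10:
  fixes J :: "'j set" and prec :: "'j \<Rightarrow> 'j \<Rightarrow> bool" and c S m r :: nat
    and x :: "('j \<times> nat \<times> nat) set \<Rightarrow> real" and y :: "'j \<Rightarrow> 'j \<Rightarrow> real" and C :: "'j \<Rightarrow> real"
    and jstar :: 'j and \<beta> :: real
  assumes "finite J"
    and "\<forall>j\<in>J. \<not> prec j j"
    and "\<forall>j1\<in>J. \<forall>j2\<in>J. \<forall>j3\<in>J. prec j1 j2 \<longrightarrow> prec j2 j3 \<longrightarrow> prec j1 j3"
    and "(x, y, C) \<in> Q J prec c S m r"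
    and "r \<ge> 5"
    and "jstar \<in> J"
    and "0 < \<beta>" and "\<beta> < 1"
  shows "real (card {j \<in> J. 1 - y j jstar \<le> \<beta>}) \<le> real c / (1 - \<beta>)"
proof -
  define V where "V = sched_vars J m S"
  define L where "L = sched_rows J m S"
  have fin: "finite V" using assms(1) by (simp add: V_def sched_vars_def)
  have xSA: "x \<in> sa_lift V L sched_A (sched_b c) r"
    and yeq: "\<forall>j1\<in>J. \<forall>j2\<in>J. y j1 j2 = (\<Sum>s<S. \<Sum>i<m. x {(j1, i, s), (j2, i, s)})"
    using assms(4) by (auto simp: Q_def SA_sched_def V_def L_def)
  have x1: "x {} = 1" using xSA by (simp add: sa_lift_def)
  have setq: "{(js, i, s)} \<union> {(j, i, s)} = {(j, i, s), (js, i, s)}" for js j :: 'j and i s :: nat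
    by auto
  have nonneg: "x {(j, i, s), (jstar, i, s)} \<ge> 0" if "j \<in> J" "i < m" "s < S" for j i s
  proof -
    have w: "(j, i, s) \<in> V" "(jstar, i, s) \<in> V" using that assms(6) by (auto simp: V_def sched_vars_def)
    have l: "Lo (j, i, s) \<in> L" using w by (simp add: L_def sched_rows_def V_def)
    have "(\<Sum>v\<in>V. sched_A (Lo (j,i,s)) v * x ({(jstar, i, s)} \<union> {v})) \<ge> sched_b c (Lo (j,i,s)) * x {(jstar, i, s)}"
      by (rule sa0[OF xSA l]) (use w assms(5) in auto)
    also have "(\<Sum>v\<in>V. sched_A (Lo (j,i,s)) v * x ({(jstar, i, s)} \<union> {v})) = x ({(jstar, i, s)} \<union> {(j,i,s)})"
    proof -
      have "(\<Sum>v\<in>V. sched_A (Lo (j,i,s)) v * x ({(jstar, i, s)} \<union> {v}))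
          = (\<Sum>v\<in>V. (if v = (j,i,s) then 1 else 0) * x ({(jstar, i, s)} \<union> {v}))"
        by (rule sum.cong) auto
      also have "\<dots> = 1 * (\<Sum>v\<in>{v\<in>V. v = (j,i,s)}. x ({(jstar, i, s)} \<union> {v}))"
        using fin by (rule sum_if_filter)
      also have "{v\<in>V. v = (j,i,s)} = {(j,i,s)}" using w by auto
      finally show ?thesis by simp
    qed
    finally show ?thesis by (simp add: setq)
  qed
  have cap: "(\<Sum>j\<in>J. x {(j, i, s), (jstar, i, s)}) \<le> real c * x {(jstar, i, s)}" if "i < m" "s < S" for i s
  proof -
    have w: "(jstar, i, s) \<in> V" using that assms(6) by (auto simp: V_def sched_vars_def)
    have l: "Cap i s \<in> L" using that by (auto simp: L_def sched_rows_def)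
    have "(\<Sum>v\<in>V. sched_A (Cap i s) v * x ({(jstar, i, s)} \<union> {v})) \<ge> sched_b c (Cap i s) * x {(jstar, i, s)}"
      using sa0[OF xSA l, of "{(jstar, i, s)}"] w assms(5) by simp
    also have "(\<Sum>v\<in>V. sched_A (Cap i s) v * x ({(jstar, i, s)} \<union> {v}))
        = (\<Sum>v\<in>V. (if snd v = (i,s) then -1 else 0) * x ({(jstar, i, s)} \<union> {v}))"
      by (rule sum.cong) (auto)
    also have "\<dots> = - (\<Sum>v\<in>{v\<in>V. snd v = (i,s)}. x ({(jstar, i, s)} \<union> {v}))"
      using fin by (simp add: sum_if_filter)
    also have "{v\<in>V. snd v = (i,s)} = (\<lambda>j. (j,i,s)) ` J"
      using that by (auto simp: V_def sched_vars_def)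
    also have "(\<Sum>v\<in>(\<lambda>j. (j,i,s)) ` J. x ({(jstar, i, s)} \<union> {v})) = (\<Sum>j\<in>J. x {(j, i, s), (jstar, i, s)})"
      by (subst sum.reindex) (auto simp: inj_on_def setq)
    finally show ?thesis by simp
  qed
  have asg: "(\<Sum>s<S. \<Sum>i<m. x {(jstar, i, s)}) \<le> 1"
  proof -
    have l: "AsgHi jstar \<in> L" using assms(6) by (auto simp: L_def sched_rows_def)
    have "(\<Sum>v\<in>V. sched_A (AsgHi jstar) v * x ({} \<union> {v})) \<ge> sched_b c (AsgHi jstar) * x {}"
      by (rule sa0[OF xSA l]) auto
    also have "(\<Sum>v\<in>V. sched_A (AsgHi jstar) v * x ({} \<union> {v}))
        = (\<Sum>v\<in>V. (if fst v = jstar then -1 else 0) * x {v})"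
      by (rule sum.cong) (auto)
    also have "\<dots> = - (\<Sum>v\<in>{v\<in>V. fst v = jstar}. x {v})"
      using fin by (simp add: sum_if_filter)
    also have "{v\<in>V. fst v = jstar} = {jstar} \<times> {..<m} \<times> {..<S}"
      using assms(6) by (auto simp: V_def sched_vars_def)
    also have "(\<Sum>v\<in>{jstar} \<times> {..<m} \<times> {..<S}. x {v}) = (\<Sum>i<m. \<Sum>s<S. x {(jstar, i, s)})"
    proof -
      have "{jstar} \<times> {..<m} \<times> {..<S} = (\<lambda>p. (jstar, p)) ` ({..<m} \<times> {..<S})" by auto
      then have "(\<Sum>v\<in>{jstar} \<times> {..<m} \<times> {..<S}. x {v}) = (\<Sum>p\<in>{..<m} \<times> {..<S}. x {(jstar, p)})"
        by (simp add: sum.reindex inj_on_def)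
      also have "\<dots> = (\<Sum>(i,s)\<in>{..<m} \<times> {..<S}. x {(jstar, i, s)})"
        by (simp add: case_prod_beta)
      also have "\<dots> = (\<Sum>i<m. \<Sum>s<S. x {(jstar, i, s)})"
        by (rule sum.cartesian_product[symmetric])
      finally show ?thesis .
    qed
    also have "\<dots> = (\<Sum>s<S. \<Sum>i<m. x {(jstar, i, s)})"
      by (rule sum.swap)
    finally show ?thesis using x1 by simp
  qed
  define U where "U = {j \<in> J. 1 - y j jstar \<le> \<beta>}"
  have UJ: "U \<subseteq> J" by (auto simp: U_def)
  have ynn: "y j jstar \<ge> 0" if "j \<in> J" for j
    using yeq that assms(6) nonneg by (simp, intro sum_nonneg) auto
  have "real (card U) * (1 - \<beta>) = (\<Sum>j\<in>U. 1 - \<beta>)" by simp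
  also have "\<dots> \<le> (\<Sum>j\<in>U. y j jstar)" by (rule sum_mono) (auto simp: U_def)
  also have "\<dots> \<le> (\<Sum>j\<in>J. y j jstar)"
    by (rule sum_mono2) (use assms(1) UJ ynn in auto)
  also have "\<dots> = (\<Sum>j\<in>J. \<Sum>s<S. \<Sum>i<m. x {(j, i, s), (jstar, i, s)})"
    using yeq assms(6) by simp
  also have "\<dots> = (\<Sum>s<S. \<Sum>i<m. \<Sum>j\<in>J. x {(j, i, s), (jstar, i, s)})"
    by (simp add: sum.swap[of _ J] )
  also have "\<dots> \<le> (\<Sum>s<S. \<Sum>i<m. real c * x {(jstar, i, s)})"
    by (intro sum_mono cap) auto
  also have "\<dots> = real c * (\<Sum>s<S. \<Sum>i<m. x {(jstar, i, s)})"
    by (simp add: sum_distrib_left)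
  also have "\<dots> \<le> real c * 1" by (rule mult_left_mono[OF asg]) auto
  finally have "real (card U) * (1 - \<beta>) \<le> real c" by simp
  then show ?thesis using assms(8) unfolding U_def[symmetric] by (simp add: field_simps)
qed

end
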